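(* Let $k\ge 2$ and let $G$ be a group that is the free product of the cyclic groups generated by $\tau,\sigma_1,\dots,\sigma_{k-1}$, where the order of $\tau$ is infinite or divisible by $3$ and the order of each $\sigma_i$ is infinite or divisible by $2$. Let $(X,m)$ be a probability space on which $G$ acts by $m$-preserving transformations, freely on a set of full measure. Consider colourings $c:X\to\{A_1,A_2,A_3\}$ (indices taken modulo $3$) and the following rule at a point $x$: let $i$ be such that $c(\tau^{-1}x)=A_i$. If $c(\tau x)\in\{A_i,A_{i+1}\}$, then $x$ must be coloured $A_{i+1}$. If $c(\tau x)=A_{i-1}$, let $n$ be the number of points among $\tau x,\tau^{-1}x,\sigma_1x,\dots,\sigma_{k-1}x$ coloured $A_1$; if $0<n<k$ then $x$ must be coloured $c(\tau x)$, and otherwise $x$ must be coloured $A_{i+1}$. Then this colouring rule is paradoxical.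
   Context: A colouring satisfies the rule if the rule holds at $m$-almost every $x$. The rule is paradoxical if (a) some colouring of $X$ (not necessarily measurable) satisfies it, and (b) there is no pair $(\mu,c)$ where $\mu$ is a finitely additive $G$-invariant probability measure defined on a $G$-invariant algebra $\mathcal{B}$ of subsets of $X$ containing all $m$-measurable sets and extending $m$, and $c$ is a colouring satisfying the rule with $c^{-1}(A_j)\in\mathcal{B}$ for $j=1,2,3$. *)

theory Defs
  imports "HOL-Probability.Probability_Measure" "HOL-Algebra.Group_Action"
    "HOL-Algebra.Multiplicative_Group" "HOL-Algebra.Generated_Groups"
begin

datatype colour = A1 | A2 | A3

fun nxt :: "colour \<Rightarrow> colour" where
  "nxt A1 = A2" | "nxt A2 = A3" | "nxt A3 = A1"

fun prv :: "colour \<Rightarrow> colour" where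
  "prv A1 = A3" | "prv A2 = A1" | "prv A3 = A2"

text \<open>G is the (internal) free product of the cyclic subgroups generated by
  gen 0, ..., gen (k-1): these generate G, and every nonempty reduced word
  (consecutive factors from different cyclic subgroups, each factor
  nontrivial) represents a nontrivial element.\<close>
definition free_product_of_cyclics ::
    "('g, 'b) monoid_scheme \<Rightarrow> (nat \<Rightarrow> 'g) \<Rightarrow> nat \<Rightarrow> bool" where
  "free_product_of_cyclics G gen k \<longleftrightarrow>
     (\<forall>i<k. gen i \<in> carrier G) \<and>
     generate G (gen ` {..<k}) = carrier G \<and>
     (\<forall>ws :: (nat \<times> int) list.
        ws \<noteq> [] \<and> (\<forall>(i, e) \<in> set ws. i < k \<and> gen i [^]\<^bsub>G\<^esub> e \<noteq> \<one>\<^bsub>G\<^esub>) \<and>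
        successively (\<lambda>a b. fst a \<noteq> fst b) ws \<longrightarrow>
        foldr (\<lambda>(i, e) acc. gen i [^]\<^bsub>G\<^esub> e \<otimes>\<^bsub>G\<^esub> acc) ws \<one>\<^bsub>G\<^esub> \<noteq> \<one>\<^bsub>G\<^esub>)"

definition rule_at ::
    "('g, 'b) monoid_scheme \<Rightarrow> ('g \<Rightarrow> 'x \<Rightarrow> 'x) \<Rightarrow> 'g \<Rightarrow> (nat \<Rightarrow> 'g) \<Rightarrow> nat
     \<Rightarrow> ('x \<Rightarrow> colour) \<Rightarrow> 'x \<Rightarrow> bool" where
  "rule_at G \<phi> tau sg k c x \<longleftrightarrow>
     (let a = c (\<phi> (inv\<^bsub>G\<^esub> tau) x);
          b = c (\<phi> tau x);
          n = (if b = A1 then 1 else 0) + (if a = A1 then 1 else 0)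
              + card {i \<in> {1..<k}. c (\<phi> (sg i) x) = A1}
      in (b = a \<or> b = nxt a \<longrightarrow> c x = nxt a) \<and>
         (b = prv a \<longrightarrow> (if 0 < n \<and> n < k then c x = b else c x = nxt a)))"

definition satisfies_rule ::
    "'x measure \<Rightarrow> ('g, 'b) monoid_scheme \<Rightarrow> ('g \<Rightarrow> 'x \<Rightarrow> 'x) \<Rightarrow> 'g \<Rightarrow> (nat \<Rightarrow> 'g)
     \<Rightarrow> nat \<Rightarrow> ('x \<Rightarrow> colour) \<Rightarrow> bool" where
  "satisfies_rule m G \<phi> tau sg k c \<longleftrightarrow> (AE x in m. rule_at G \<phi> tau sg k c x)"

definition invariant_extension ::
    "'x measure \<Rightarrow> ('g, 'b) monoid_scheme \<Rightarrow> ('g \<Rightarrow> 'x \<Rightarrow> 'x) \<Rightarrow> 'x set set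
     \<Rightarrow> ('x set \<Rightarrow> ennreal) \<Rightarrow> bool" where
  "invariant_extension m G \<phi> B \<mu> \<longleftrightarrow>
     Sigma_Algebra.algebra (space m) B \<and> sets m \<subseteq> B \<and>
     positive B \<mu> \<and> additive B \<mu> \<and> \<mu> (space m) = 1 \<and>
     (\<forall>A \<in> sets m. \<mu> A = emeasure m A) \<and>
     (\<forall>g \<in> carrier G. \<forall>A \<in> B. \<phi> g ` A \<in> B \<and> \<mu> (\<phi> g ` A) = \<mu> A)"

definition paradoxical_rule ::
    "'x measure \<Rightarrow> ('g, 'b) monoid_scheme \<Rightarrow> ('g \<Rightarrow> 'x \<Rightarrow> 'x) \<Rightarrow> 'g \<Rightarrow> (nat \<Rightarrow> 'g)
     \<Rightarrow> nat \<Rightarrow> bool" where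
  "paradoxical_rule m G \<phi> tau sg k \<longleftrightarrow>
     (\<exists>c. satisfies_rule m G \<phi> tau sg k c) \<and>
     \<not> (\<exists>B \<mu> c. invariant_extension m G \<phi> B \<mu> \<and>
                satisfies_rule m G \<phi> tau sg k c \<and>
                (\<forall>j. c -` {j} \<inter> space m \<in> B))"

end

theory Submission
  imports Defs
begin


fun flp :: "colour \<Rightarrow> colour" where "flp c = (if c = A1 then A2 else A1)"

definition stp :: "nat \<Rightarrow> int \<Rightarrow> colour \<Rightarrow> colour" where
  "stp i e c = (if i = 0 then (nxt ^^ nat (e mod 3)) c else (if even e then c else flp c))"

fun fw :: "(nat \<times> int) list \<Rightarrow> colour" where
  "fw [] = A1"
| "fw (x # w) = stp (fst x) (snd x) (fw w)"

lemma nxt_prv[simp]: "nxt (prv c) = c" "prv (nxt c) = c" by (cases c; simp)+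
lemma nxt3: "nxt (nxt (nxt c)) = c" by (cases c; simp)

locale fpc = group G for G (structure) +
  fixes gen :: "nat \<Rightarrow> 'a" and k :: nat
  assumes fp: "free_product_of_cyclics G gen k"
  and ord0: "ord (gen 0) = 0 \<or> 3 dvd ord (gen 0)"
  and ordi: "\<And>i. 1 \<le> i \<Longrightarrow> i < k \<Longrightarrow> ord (gen i) = 0 \<or> 2 dvd ord (gen i)"
  and k0: "0 < k"
begin

lemma gen_carr: "\<And>i. i < k \<Longrightarrow> gen i \<in> carrier G"
  using fp unfolding free_product_of_cyclics_def by blast

lemma gen_gen: "generate G (gen ` {..<k}) = carrier G"
  using fp unfolding free_product_of_cyclics_def by blast

lemma free: "\<And>ws :: (nat \<times> int) list.
        ws \<noteq> [] \<Longrightarrow> (\<forall>(i, e) \<in> set ws. i < k \<and> gen i [^] e \<noteq> \<one>) \<Longrightarrow>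
        successively (\<lambda>a b. fst a \<noteq> fst b) ws \<Longrightarrow>
        foldr (\<lambda>(i, e) acc. gen i [^] e \<otimes> acc) ws \<one> \<noteq> \<one>"
  using fp unfolding free_product_of_cyclics_def by blast

definition ev :: "(nat \<times> int) list \<Rightarrow> 'a" where
  "ev ws = foldr (\<lambda>(i, e) acc. gen i [^] e \<otimes> acc) ws \<one>"

definition red :: "(nat \<times> int) list \<Rightarrow> bool" where
  "red ws \<longleftrightarrow> (\<forall>(i, e) \<in> set ws. i < k \<and> gen i [^] e \<noteq> \<one>) \<and>
        successively (\<lambda>a b. fst a \<noteq> fst b) ws"

lemma ev_Nil[simp]: "ev [] = \<one>" by (simp add: ev_def)
lemma ev_Cons[simp]: "ev ((i,e) # w) = gen i [^] e \<otimes> ev w" by (simp add: ev_def)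

definition idx :: "(nat \<times> int) list \<Rightarrow> bool" where
  "idx ws \<longleftrightarrow> (\<forall>x \<in> set ws. fst x < k)"

lemma red_idx: "red ws \<Longrightarrow> idx ws" by (auto simp: red_def idx_def)

lemma ev_closed[simp]: "idx ws \<Longrightarrow> ev ws \<in> carrier G"
  by (induction ws) (auto simp: idx_def gen_carr)

lemma ev_append: "idx xs \<Longrightarrow> idx ys \<Longrightarrow> ev (xs @ ys) = ev xs \<otimes> ev ys"
proof (induction xs)
  case Nil then show ?case by simp
next
  case (Cons x xs)
  obtain i e where x: "x = (i,e)" by force
  have "idx xs" "i < k" using Cons.prems x by (auto simp: idx_def)
  then show ?case using Cons x by (simp add: m_assoc gen_carr)
qed

definition invw :: "(nat \<times> int) list \<Rightarrow> (nat \<times> int) list" where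
  "invw ws = rev (map (\<lambda>(i,e). (i, -e)) ws)"

lemma idx_invw: "idx ws \<Longrightarrow> idx (invw ws)" by (auto simp: idx_def invw_def)

lemma ev_invw: "idx ws \<Longrightarrow> ev (invw ws) = inv (ev ws)"
proof (induction ws)
  case Nil then show ?case by (simp add: invw_def)
next
  case (Cons x xs)
  obtain i e where x: "x = (i,e)" by force
  have ix: "idx xs" "i < k" using Cons.prems x by (auto simp: idx_def)
  have eq: "invw (x # xs) = invw xs @ [(i,-e)]" by (simp add: invw_def x)
  have "ev (invw (x # xs)) = inv (ev xs) \<otimes> (gen i [^] (-e))"
  proof -
    have "ev (invw xs @ [(i,-e)]) = ev (invw xs) \<otimes> ev [(i,-e)]"
      by (rule ev_append) (use ix idx_invw in \<open>auto simp: idx_def\<close>)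
    then show ?thesis using ix Cons eq by (simp add: gen_carr)
  qed
  also have "\<dots> = inv (gen i [^] e \<otimes> ev xs)"
    using ix by (simp add: inv_mult_group int_pow_neg gen_carr)
  finally show ?case by (simp add: x)
qed

lemma red_invw: "red ws \<Longrightarrow> red (invw ws)"
proof -
  assume r: "red ws"
  have e: "(\<lambda>x y. fst y \<noteq> fst x) = (\<lambda>(a::nat\<times>int) b. fst a \<noteq> fst b)"
    by (auto simp: fun_eq_iff)
  have s: "successively (\<lambda>a b. fst a \<noteq> fst b) ws" using r by (simp add: red_def)
  have "successively (\<lambda>a b. fst a \<noteq> fst b) (invw ws)"
  proof -
    have "successively (\<lambda>x y. fst y \<noteq> fst x) ws"
      using s by (rule successively_mono) auto
    then show ?thesis unfolding invw_def successively_rev successively_map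
      by (simp add: case_prod_beta)
  qed
  moreover have "\<forall>(i, e) \<in> set (invw ws). i < k \<and> gen i [^] e \<noteq> \<one>"
    using r by (auto simp: red_def invw_def int_pow_neg gen_carr)
  ultimately show ?thesis by (simp add: red_def)
qed


lemma red_Cons: "red ((i,e)#w) \<longleftrightarrow> i<k \<and> gen i [^] e \<noteq> \<one> \<and> red w \<and> (w = [] \<or> fst (hd w) \<noteq> i)"
  by (cases w) (auto simp: red_def)

lemma red_append: "red (xs @ ys) \<longleftrightarrow> red xs \<and> red ys \<and> (xs = [] \<or> ys = [] \<or> fst (last xs) \<noteq> fst (hd ys))"
  by (auto simp: red_def successively_append_iff)

lemma last_invw: "w \<noteq> [] \<Longrightarrow> fst (last (invw w)) = fst (hd w)"
  by (cases w) (auto simp: invw_def case_prod_beta)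

definition consn :: "nat \<Rightarrow> int \<Rightarrow> (nat \<times> int) list \<Rightarrow> (nat \<times> int) list" where
  "consn j e w = (case w of (i,d)#w' \<Rightarrow> if i = j then (if gen j [^] (e+d) = \<one> then w' else (j,e+d)#w')
      else (if gen j [^] e = \<one> then w else (j,e)#w)
    | [] \<Rightarrow> (if gen j [^] e = \<one> then [] else [(j,e)]))"

lemma consn: assumes "red w" "j < k"
  shows "red (consn j e w) \<and> ev (consn j e w) = gen j [^] e \<otimes> ev w"
proof (cases w)
  case Nil then show ?thesis using assms by (auto simp: consn_def red_def)
next
  case (Cons x w')
  obtain i d where x: "x = (i,d)" by force
  have r: "i<k" "gen i [^] d \<noteq> \<one>" "red w'" "(w' = [] \<or> fst (hd w') \<noteq> i)"
    using assms Cons x red_Cons by auto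
  have c: "ev w' \<in> carrier G" using r red_idx by auto
  have gc: "gen j \<in> carrier G" "gen i \<in> carrier G" using assms r gen_carr by auto
  show ?thesis
  proof (cases "i = j")
    case True
    have "gen j [^] e \<otimes> ev w = gen j [^] (e+d) \<otimes> ev w'"
      using Cons x True gc c by (simp add: int_pow_mult m_assoc)
    then show ?thesis using Cons x True r assms c by (auto simp: consn_def red_Cons)
  next
    case False
    then show ?thesis using Cons x r assms c gc by (auto simp: consn_def red_Cons)
  qed
qed

lemma mult_word: "red w2 \<Longrightarrow> idx v \<Longrightarrow> \<exists>w. red w \<and> ev w = ev v \<otimes> ev w2"
proof (induction v)
  case Nil then show ?case using red_idx by force
next
  case (Cons x v)
  obtain i e where x: "x = (i,e)" by force
  have iv: "idx v" "i < k" using Cons.prems x by (auto simp: idx_def)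
  obtain w where w: "red w" "ev w = ev v \<otimes> ev w2" using Cons iv by blast
  have "red (consn i e w) \<and> ev (consn i e w) = gen i [^] e \<otimes> ev w" using consn w iv by blast
  then show ?case using w x iv Cons.prems red_idx[OF Cons.prems(1)]
    by (metis ev_Cons ev_closed gen_carr int_pow_closed m_assoc)
qed

lemma exists_nf: assumes "g \<in> carrier G" shows "\<exists>w. red w \<and> ev w = g"
proof -
  have "g \<in> generate G (gen ` {..<k})" using assms gen_gen by simp
  then show ?thesis
  proof (induction rule: generate.induct)
    case one then show ?case by (intro exI[of _ "[]"]) (simp add: red_def)
  next
    case (incl h)
    then obtain j where j: "j < k" "h = gen j" by auto
    have "red (consn j 1 []) \<and> ev (consn j 1 []) = gen j [^] (1::int) \<otimes> ev []"
      using consn[of "[]" j] j by (simp add: red_def)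
    then show ?case using j gen_carr by auto
  next
    case (inv h)
    then obtain j where j: "j < k" "h = gen j" by auto
    have "red (consn j (-1) []) \<and> ev (consn j (-1) []) = gen j [^] (-1::int) \<otimes> ev []"
      using consn[of "[]" j] j by (simp add: red_def)
    then show ?case using j gen_carr by (auto simp: int_pow_neg)
  next
    case (eng h1 h2)
    then obtain w1 w2 where "red w1" "ev w1 = h1" "red w2" "ev w2 = h2" by auto
    then show ?case using mult_word red_idx by blast
  qed
qed

lemma ev_one_red: "red w \<Longrightarrow> ev w = \<one> \<Longrightarrow> w = []"
  using free unfolding red_def ev_def by blast

lemma pow_dvd: "i < k \<Longrightarrow> gen i [^] (x::int) = \<one> \<Longrightarrow> int (ord (gen i)) dvd x"
  using int_pow_eq_id gen_carr by blast

lemma dvd0: "gen 0 [^] (x::int) = \<one> \<Longrightarrow> 3 dvd x"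
proof -
  assume a: "gen 0 [^] (x::int) = \<one>"
  then have d: "int (ord (gen 0)) dvd x" using pow_dvd k0 by blast
  show ?thesis using ord0
  proof
    assume "ord (gen 0) = 0" then show ?thesis using d by simp
  next
    assume "3 dvd ord (gen 0)"
    then have "int 3 dvd int (ord (gen 0))" using int_dvd_int_iff by blast
    then show ?thesis using d by (metis dvd_trans of_nat_numeral)
  qed
qed

lemma dvdi: "1 \<le> i \<Longrightarrow> i < k \<Longrightarrow> gen i [^] (x::int) = \<one> \<Longrightarrow> 2 dvd x"
proof -
  assume i: "1 \<le> i" "i < k" and a: "gen i [^] (x::int) = \<one>"
  then have d: "int (ord (gen i)) dvd x" using pow_dvd by blast
  show ?thesis using ordi[OF i]
  proof
    assume "ord (gen i) = 0" then show ?thesis using d by simp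
  next
    assume "2 dvd ord (gen i)"
    then have "int 2 dvd int (ord (gen i))" using int_dvd_int_iff by blast
    then show ?thesis using d by (metis dvd_trans of_nat_numeral)
  qed
qed

lemma gen_ne: "i < k \<Longrightarrow> gen i [^] (1::int) \<noteq> \<one>"
proof
  assume i: "i < k" and a: "gen i [^] (1::int) = \<one>"
  show False
  proof (cases "i = 0")
    case True then show False using dvd0 a by fastforce
  next
    case False then show False using dvdi[of i 1] a i by simp
  qed
qed

lemma pow_eq_diff: "i < k \<Longrightarrow> gen i [^] (e::int) = gen i [^] d \<Longrightarrow> gen i [^] (e - d) = \<one>"
  using gen_carr by (simp add: int_pow_diff)

lemma stp_eq: assumes "i < k" "gen i [^] (e::int) = gen i [^] d" shows "stp i e c = stp i d c"
proof (cases "i = 0")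
  case True
  then have "3 dvd e - d" using dvd0 pow_eq_diff assms by blast
  then have "e mod 3 = d mod 3" by (simp add: mod_eq_dvd_iff)
  then show ?thesis by (simp add: stp_def True)
next
  case False
  have "gen i [^] (e-d) = \<one>" using pow_eq_diff assms by blast
  then have "2 dvd e - d" using dvdi[of i "e-d"] False assms by linarith
  then have "even e \<longleftrightarrow> even d" by presburger
  then show ?thesis by (simp add: stp_def False)
qed

lemma uniq: "red w1 \<Longrightarrow> red w2 \<Longrightarrow> ev w1 = ev w2 \<Longrightarrow> fw w1 = fw w2"
proof (induction w1 arbitrary: w2)
  case Nil then show ?case using ev_one_red by fastforce
next
  case (Cons x w1)
  obtain i e where x: "x = (i,e)" by force
  have r1: "i<k" "gen i [^] e \<noteq> \<one>" "red w1" "(w1 = [] \<or> fst (hd w1) \<noteq> i)"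
    using Cons.prems x red_Cons by auto
  show ?case
  proof (cases w2)
    case Nil then show ?thesis using Cons.prems ev_one_red by fastforce
  next
    case (Cons y w2')
    obtain j d where y: "y = (j,d)" by force
    have r2: "j<k" "gen j [^] d \<noteq> \<one>" "red w2'" "(w2' = [] \<or> fst (hd w2') \<noteq> j)"
      using Cons \<open>red w2\<close> y red_Cons by auto
    have c: "ev w1 \<in> carrier G" "ev w2' \<in> carrier G" using r1 r2 red_idx by auto
    have gc: "gen j \<in> carrier G" "gen i \<in> carrier G" using r1 r2 gen_carr by auto
    have eq: "gen i [^] e \<otimes> ev w1 = gen j [^] d \<otimes> ev w2'"
      using Cons.prems(3) x Cons y by simp
    show ?thesis
    proof (cases "i = j \<and> gen i [^] e = gen j [^] d")
      case True
      then have "ev w1 = ev w2'" using eq c gc True by simp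
      then have "fw w1 = fw w2'" using Cons.IH r1 r2 by blast
      then show ?thesis using True stp_eq[of i e d] r1 x y Cons by force
    next
      case False
      define W where "W = (if i = j then invw w2' @ ((i, -d+e) # w1) else invw ((j,d)#w2') @ ((i,e)#w1))"
      have "red W"
      proof (cases "i = j")
        case True
        have ge: "gen i [^] (-d+e) = inv (gen i [^] d) \<otimes> gen i [^] e"
          using gc(2) int_pow_mult[of "gen i" "-d" e] int_pow_neg[of "gen i" d] by metis
        have "gen i [^] (-d+e) \<noteq> \<one>"
        proof
          assume "gen i [^] (-d+e) = \<one>"
          then have "gen i [^] d \<otimes> (inv (gen i [^] d) \<otimes> gen i [^] e) = gen i [^] d"
            using ge gc by simp
          then have "gen i [^] e = gen i [^] d" using gc by (simp add: m_assoc[symmetric])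
          then show False using False True by simp
        qed
        then have "red ((i, -d+e) # w1)" using r1 red_Cons by auto
        then have "red (invw w2' @ ((i, -d+e) # w1))" unfolding red_append
          using True r2 red_invw last_invw by (auto simp: invw_def)
        then show ?thesis using True W_def by simp
      next
        case False
        have "red (invw ((j,d)#w2'))" using red_invw Cons \<open>red w2\<close> y by simp
        moreover have "fst (last (invw ((j,d)#w2'))) = j" using last_invw by fastforce
        ultimately have "red (invw ((j,d)#w2') @ ((i,e)#w1))" unfolding red_append
          using False Cons.prems(1) x by auto
        then show ?thesis using False W_def by simp
      qed
      moreover have "ev W = \<one>"
      proof (cases "i = j")
        case True
        have i3: "idx w2'" "idx ((i, -d+e) # w1)" using r1 r2 red_idx by (auto simp: idx_def)
        have "ev W = ev (invw w2') \<otimes> ev ((i, -d+e) # w1)"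
          using True ev_append[OF idx_invw[OF i3(1)] i3(2)] unfolding W_def by simp
        also have "\<dots> = inv (ev w2') \<otimes> (gen i [^] (-d+e) \<otimes> ev w1)"
          using ev_invw[OF i3(1)] by simp
        also have "\<dots> = inv (gen j [^] d \<otimes> ev w2') \<otimes> (gen i [^] e \<otimes> ev w1)"
        proof -
          have "gen i [^] (-d+e) = inv (gen i [^] d) \<otimes> gen i [^] e"
            using gc(2) int_pow_mult[of "gen i" "-d" e] int_pow_neg[of "gen i" d] by metis
          then show ?thesis using True c gc by (simp add: inv_mult_group m_assoc)
        qed
        also have "\<dots> = \<one>" using eq c gc by simp
        finally show ?thesis .
      next
        case False
        have i2: "idx ((j,d)#w2')" "idx ((i,e)#w1)" using red_idx Cons.prems(1,2) x y Cons by auto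
        have "ev W = inv (ev ((j,d)#w2')) \<otimes> ev ((i,e)#w1)"
          using False i2 ev_append ev_invw idx_invw unfolding W_def by simp
        also have "\<dots> = \<one>" using eq c gc by simp
        finally show ?thesis .
      qed
      moreover have "W \<noteq> []" unfolding W_def by simp
      ultimately show ?thesis using ev_one_red by blast
    qed
  qed
qed

definition nf :: "'a \<Rightarrow> (nat \<times> int) list" where "nf g = (SOME w. red w \<and> ev w = g)"
definition ff :: "'a \<Rightarrow> colour" where "ff g = fw (nf g)"

lemma nf: "g \<in> carrier G \<Longrightarrow> red (nf g) \<and> ev (nf g) = g"
  unfolding nf_def using exists_nf by (rule someI_ex) blast

lemma ff_eq: "red w \<Longrightarrow> ff (ev w) = fw w"
  unfolding ff_def using nf uniq red_idx ev_closed by blast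

lemma funpow_nxt: "(nxt ^^ 0) c = c" "(nxt ^^ 1) c = nxt c" "(nxt ^^ 2) c = nxt (nxt c)"
  by (simp_all add: numeral_2_eq_2)

lemma stp0_succ: "stp 0 (1+d) c = nxt (stp 0 d c)"
proof -
  have "d mod 3 = 0 \<or> d mod 3 = 1 \<or> d mod 3 = 2" by presburger
  moreover
  { assume "d mod 3 = 0" then have "(1+d) mod 3 = 1" by presburger
    with \<open>d mod 3 = 0\<close> have ?thesis unfolding stp_def by (simp add: funpow_nxt) }
  moreover
  { assume "d mod 3 = 1" then have "(1+d) mod 3 = 2" by presburger
    with \<open>d mod 3 = 1\<close> have ?thesis unfolding stp_def by (simp add: funpow_nxt) }
  moreover
  { assume "d mod 3 = 2" then have "(1+d) mod 3 = 0" by presburger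
    with \<open>d mod 3 = 2\<close> have ?thesis unfolding stp_def by (simp add: funpow_nxt nxt3) }
  ultimately show ?thesis by metis
qed

lemma stp0_dvd: "3 dvd x \<Longrightarrow> stp 0 x c = c"
  by (simp add: stp_def)

lemma stpj_succ: "j \<noteq> 0 \<Longrightarrow> (stp j (1+d) c = A1) \<longleftrightarrow> (stp j d c \<noteq> A1)"
  by (auto simp: stp_def)

lemma stpj_even: "j \<noteq> 0 \<Longrightarrow> even x \<Longrightarrow> stp j x c = c"
  by (simp add: stp_def)

lemma fw_consn0: assumes "red w" shows "fw (consn 0 1 w) = nxt (fw w)"
proof (cases w)
  case Nil then show ?thesis using gen_ne k0 by (simp add: consn_def stp_def)
next
  case (Cons x w')
  obtain i d where x: "x = (i,d)" by force
  show ?thesis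
  proof (cases "i = 0")
    case True
    show ?thesis
    proof (cases "gen 0 [^] (1+d) = \<one>")
      case c: True
      then have "3 dvd (1+d)" using dvd0 by blast
      then show ?thesis using Cons x True c stp0_succ[of d] stp0_dvd[of "1+d"] by (simp add: consn_def)
    next
      case False
      then show ?thesis using Cons x True stp0_succ by (simp add: consn_def)
    qed
  next
    case False
    then show ?thesis using Cons x gen_ne[of 0] k0 by (simp add: consn_def stp_def)
  qed
qed

lemma stpj_1: "j \<noteq> 0 \<Longrightarrow> (stp j 1 c = A1) \<longleftrightarrow> (c \<noteq> A1)"
  by (simp add: stp_def)

lemma fw_consnj: assumes "red w" "1 \<le> j" "j < k" shows "(fw (consn j 1 w) = A1) \<longleftrightarrow> (fw w \<noteq> A1)"
proof (cases w)
  case Nil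
  have j0: "j \<noteq> 0" using assms by simp
  have "consn j 1 w = [(j,1)]" using Nil gen_ne[OF assms(3)] by (simp add: consn_def)
  then show ?thesis using Nil stpj_1[OF j0] by simp
next
  case (Cons x w')
  obtain i d where x: "x = (i,d)" by force
  have j0: "j \<noteq> 0" using assms by simp
  show ?thesis
  proof (cases "i = j")
    case True
    show ?thesis
    proof (cases "gen j [^] (1+d) = \<one>")
      case c: True
      then have "even (1+d)" using dvdi assms by blast
      moreover have "consn j 1 w = w'" using Cons x True c by (simp add: consn_def)
      ultimately show ?thesis using Cons x True stpj_succ[OF j0, of d "fw w'"] stpj_even[OF j0, of "1+d" "fw w'"]
        by simp
    next
      case False
      have "consn j 1 w = (j,1+d) # w'" using Cons x True False by (simp add: consn_def)
      then show ?thesis using Cons x True stpj_succ[OF j0, of d "fw w'"] by simp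
    qed
  next
    case False
    have "consn j 1 w = (j,1) # w" using Cons x False gen_ne[OF assms(3)] by (simp add: consn_def)
    then show ?thesis using stpj_1[OF j0] by simp
  qed
qed

lemma ff_tau: "g \<in> carrier G \<Longrightarrow> ff (gen 0 \<otimes> g) = nxt (ff g)"
proof -
  assume g: "g \<in> carrier G"
  have n: "red (nf g)" "ev (nf g) = g" using nf g by auto
  have c: "red (consn 0 1 (nf g))" "ev (consn 0 1 (nf g)) = gen 0 [^] (1::int) \<otimes> g"
    using consn[OF n(1) k0] n by auto
  have "gen 0 [^] (1::int) = gen 0" using gen_carr k0 by simp
  then have "ff (gen 0 \<otimes> g) = ff (ev (consn 0 1 (nf g)))" using c by simp
  also have "\<dots> = fw (consn 0 1 (nf g))" using ff_eq c by blast
  also have "\<dots> = nxt (fw (nf g))" using fw_consn0 n by blast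
  finally show ?thesis unfolding ff_def .
qed

lemma ff_sig: "g \<in> carrier G \<Longrightarrow> 1 \<le> j \<Longrightarrow> j < k \<Longrightarrow> (ff (gen j \<otimes> g) = A1) \<longleftrightarrow> (ff g \<noteq> A1)"
proof -
  assume g: "g \<in> carrier G" and j: "1 \<le> j" "j < k"
  have n: "red (nf g)" "ev (nf g) = g" using nf g by auto
  have c: "red (consn j 1 (nf g))" "ev (consn j 1 (nf g)) = gen j [^] (1::int) \<otimes> g"
    using consn[OF n(1) j(2)] n by auto
  have "gen j [^] (1::int) = gen j" using gen_carr j by simp
  then have "ff (gen j \<otimes> g) = ff (ev (consn j 1 (nf g)))" using c by simp
  also have "\<dots> = fw (consn j 1 (nf g))" using ff_eq c by blast
  finally have "ff (gen j \<otimes> g) = fw (consn j 1 (nf g))" .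
  then show ?thesis using fw_consnj[OF n(1) j] unfolding ff_def by simp
qed

lemma ff_itau: "g \<in> carrier G \<Longrightarrow> ff (inv (gen 0) \<otimes> g) = prv (ff g)"
proof -
  assume g: "g \<in> carrier G"
  have c: "gen 0 \<in> carrier G" using gen_carr k0 by blast
  have ig: "inv (gen 0) \<otimes> g \<in> carrier G" using c g by simp
  have e1: "ff (gen 0 \<otimes> (inv (gen 0) \<otimes> g)) = nxt (ff (inv (gen 0) \<otimes> g))"
    using ff_tau[OF ig] .
  have e2: "gen 0 \<otimes> (inv (gen 0) \<otimes> g) = g" using c g by (simp add: m_assoc[symmetric])
  have "ff g = nxt (ff (inv (gen 0) \<otimes> g))" using e1 e2 by simp
  then have "prv (ff g) = prv (nxt (ff (inv (gen 0) \<otimes> g)))" by simp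
  then show ?thesis by simp
qed

end



lemma mu_un_le:
  assumes "Sigma_Algebra.algebra S B" "positive B \<mu>" "additive B \<mu>" "X \<in> B" "Y \<in> B"
  shows "\<mu> (X \<union> Y) \<le> \<mu> X + \<mu> Y"
proof -
  interpret Sigma_Algebra.algebra S B by fact
  have inc: "increasing B \<mu>" using additive_increasing assms(2,3) by blast
  have d: "Y - X \<in> B" using Diff assms(4,5) by blast
  have e: "X \<union> Y = X \<union> (Y - X)" by blast
  have a: "\<mu> (X \<union> (Y - X)) = \<mu> X + \<mu> (Y - X)"
    by (rule additiveD[OF assms(3)]) (use d assms(4) in auto)
  have l: "\<mu> (Y - X) \<le> \<mu> Y"
    using inc d assms(5) unfolding increasing_def by blast
  have "\<mu> (X \<union> Y) = \<mu> X + \<mu> (Y - X)" using e a by simp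
  also have "\<dots> \<le> \<mu> X + \<mu> Y" using l by (rule add_left_mono)
  finally show ?thesis .
qed

lemma mu_diff_null:
  assumes "Sigma_Algebra.algebra S B" "positive B \<mu>" "additive B \<mu>" "X \<in> B" "Z \<in> B" "\<mu> Z = 0"
  shows "\<mu> (X - Z) = \<mu> X"
proof -
  interpret Sigma_Algebra.algebra S B by fact
  have inc: "increasing B \<mu>" using additive_increasing assms(2,3) by blast
  have d: "X - Z \<in> B" using Diff assms(4,5) by blast
  have u: "X \<union> Z \<in> B" using Un assms(4,5) by blast
  have "\<mu> X \<le> \<mu> (X \<union> Z)" using inc assms(4) u unfolding increasing_def by blast
  also have "X \<union> Z = (X - Z) \<union> Z" by blast
  also have "\<mu> ((X - Z) \<union> Z) \<le> \<mu> (X - Z) + \<mu> Z" using mu_un_le[OF assms(1-3) d assms(5)] .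
  also have "\<dots> = \<mu> (X - Z)" using assms(6) by simp
  finally have "\<mu> X \<le> \<mu> (X - Z)" .
  moreover have "\<mu> (X - Z) \<le> \<mu> X" using inc assms(4) d unfolding increasing_def by blast
  ultimately show ?thesis by (rule antisym[rotated])
qed

lemma ennreal_contra: "(p::ennreal) + p \<le> p \<Longrightarrow> p + p + p = 1 \<Longrightarrow> False"
proof (cases p)
  case (real r)
  assume a: "p + p \<le> p" "p + p + p = 1"
  then have "ennreal (r + r) \<le> ennreal r" using real by (simp add: ennreal_plus[symmetric])
  then have "r + r \<le> r" using real by (simp add: ennreal_le_iff)
  then have "r = 0" using real by simp
  then show False using a real by simp
next
  case top
  assume "p + p + p = 1" then show False using top by simp
qed

lemma col3: "b = a \<or> b = nxt a \<or> b = prv a" "nxt a \<noteq> a" "prv a \<noteq> a" "nxt a \<noteq> prv a"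
  by (cases a; cases b; simp)+

lemma rule_cases:
  assumes "rule_at G \<phi> tau sg k c x"
  shows "c (\<phi> tau x) = c (\<phi> (inv\<^bsub>G\<^esub> tau) x) \<or> c (\<phi> tau x) = nxt (c (\<phi> (inv\<^bsub>G\<^esub> tau) x))
           \<Longrightarrow> c x = nxt (c (\<phi> (inv\<^bsub>G\<^esub> tau) x))"
    and "c (\<phi> tau x) = prv (c (\<phi> (inv\<^bsub>G\<^esub> tau) x))
           \<Longrightarrow> c x = c (\<phi> tau x) \<or> c x = nxt (c (\<phi> (inv\<^bsub>G\<^esub> tau) x))"
proof -
  let ?a = "c (\<phi> (inv\<^bsub>G\<^esub> tau) x)"
  let ?b = "c (\<phi> tau x)"
  let ?S = "{i \<in> {1..<k}. c (\<phi> (sg i) x) = A1}"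
  let ?n = "(if ?b = A1 then 1 else 0) + (if ?a = A1 then 1 else 0) + card ?S"
  have r1: "?b = ?a \<or> ?b = nxt ?a \<longrightarrow> c x = nxt ?a"
    using assms unfolding rule_at_def Let_def by blast
  have r2: "?b = prv ?a \<longrightarrow> (if 0 < ?n \<and> ?n < k then c x = ?b else c x = nxt ?a)"
    using assms unfolding rule_at_def Let_def by blast
  show "?b = ?a \<or> ?b = nxt ?a \<Longrightarrow> c x = nxt ?a" using r1 by blast
  show "?b = prv ?a \<Longrightarrow> c x = ?b \<or> c x = nxt ?a"
  proof -
    assume "?b = prv ?a"
    then have "if 0 < ?n \<and> ?n < k then c x = ?b else c x = nxt ?a" using r2 by blast
    then show ?thesis by (cases "0 < ?n \<and> ?n < k") simp_all
  qed
qed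

lemma rule_neq:
  assumes "rule_at G \<phi> tau sg k c y"
  shows "c y \<noteq> c (\<phi> (inv\<^bsub>G\<^esub> tau) y)"
  using rule_cases[OF assms] col3(1)[of "c (\<phi> tau y)" "c (\<phi> (inv\<^bsub>G\<^esub> tau) y)"] col3(2-4) by metis

lemma rule_nxt:
  assumes "rule_at G \<phi> tau sg k c x" "c (\<phi> tau x) \<noteq> c x"
  shows "c x = nxt (c (\<phi> (inv\<^bsub>G\<^esub> tau) x))"
  using rule_cases[OF assms(1)] col3(1)[of "c (\<phi> tau x)" "c (\<phi> (inv\<^bsub>G\<^esub> tau) x)"] col3(2-4) assms(2) by metis

lemma card_full:
  assumes "card {i \<in> {1..<k}. P i} \<ge> k - 1" "(1::nat) < k"
  shows "P 1"
proof (rule ccontr)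
  assume "\<not> P 1"
  have "{i \<in> {1..<k}. P i} \<subseteq> {2..<k}"
  proof
    fix i assume i: "i \<in> {i \<in> {1..<k}. P i}"
    then have "i \<noteq> 1" using \<open>\<not> P 1\<close> by auto
    then show "i \<in> {2..<k}" using i by auto
  qed
  then have "card {i \<in> {1..<k}. P i} \<le> card {2..<k}" by (rule card_mono[rotated]) simp
  then show False using assms by simp
qed

lemma rule_sig:
  assumes "rule_at G \<phi> tau sg k c x" "c x = nxt (c (\<phi> (inv\<^bsub>G\<^esub> tau) x))"
    "c (\<phi> tau x) = nxt (c x)" "c x \<noteq> A1" "1 < k"
  shows "c (\<phi> (sg 1) x) = A1"
proof -
  let ?S = "{i \<in> {1..<k}. c (\<phi> (sg i) x) = A1}"
  let ?a = "c (\<phi> (inv\<^bsub>G\<^esub> tau) x)"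
  let ?b = "c (\<phi> tau x)"
  let ?n = "(if ?b = A1 then 1 else 0) + (if ?a = A1 then 1 else 0) + card ?S"
  have b: "?b = prv ?a" using assms(2,3) by (cases ?a) auto
  have r: "?b = prv ?a \<longrightarrow> (if 0 < ?n \<and> ?n < k then c x = ?b else c x = nxt ?a)"
    using assms(1) unfolding rule_at_def Let_def by blast
  have ne: "nxt ?a \<noteq> prv ?a" by (cases ?a) auto
  have "\<not> (0 < ?n \<and> ?n < k)"
  proof
    assume "0 < ?n \<and> ?n < k"
    then have "c x = ?b" using r b by simp
    then show False using b ne assms(2) by simp
  qed
  moreover have "(if ?b = A1 then 1 else 0) + (if ?a = A1 then 1 else 0) = (1::nat)"
    using assms(2,4) b by (cases ?a) auto
  ultimately have "card ?S \<ge> k - 1" by simp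
  then show ?thesis using card_full[of k "\<lambda>i. c (\<phi> (sg i) x) = A1"] assms(5) by blast
qed




theorem proposition2:
  fixes G :: "('g, 'b) monoid_scheme"
    and \<phi> :: "'g \<Rightarrow> 'x \<Rightarrow> 'x"
    and m :: "'x measure"
    and tau :: 'g and sg :: "nat \<Rightarrow> 'g" and k :: nat
  assumes "k \<ge> 2"
    and "group G"
    and "tau \<in> carrier G" and "\<forall>i \<in> {1..<k}. sg i \<in> carrier G"
    and "free_product_of_cyclics G (\<lambda>i. if i = 0 then tau else sg i) k"
    and "group.ord G tau = 0 \<or> 3 dvd group.ord G tau"
    and "\<forall>i \<in> {1..<k}. group.ord G (sg i) = 0 \<or> 2 dvd group.ord G (sg i)"
    and "prob_space m"
    and "group_action G (space m) \<phi>"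
    and "\<forall>g \<in> carrier G. \<phi> g \<in> measurable m m \<and>
           (\<forall>A \<in> sets m. emeasure m (\<phi> g -` A \<inter> space m) = emeasure m A)"
    and "AE x in m. \<forall>g \<in> carrier G. \<phi> g x = x \<longrightarrow> g = \<one>\<^bsub>G\<^esub>"
  shows "paradoxical_rule m G \<phi> tau sg k"
proof -
  interpret grp: group G by (rule assms(2))
  interpret act: group_action G "space m" \<phi> by (rule assms(9))
  have k1: "1 < k" using assms(1) by simp
  have tC: "tau \<in> carrier G" by (rule assms(3))
  have sC: "\<And>i. 1 \<le> i \<Longrightarrow> i < k \<Longrightarrow> sg i \<in> carrier G" using assms(4) by auto
  have fpc: "fpc G (\<lambda>i. if i = 0 then tau else sg i) k"
  proof (intro fpc.intro fpc_axioms.intro)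
    show "group G" by (rule assms(2))
    show "free_product_of_cyclics G (\<lambda>i. if i = 0 then tau else sg i) k" by (rule assms(5))
    show "grp.ord ((\<lambda>i. if i = 0 then tau else sg i) 0) = 0 \<or> 3 dvd grp.ord ((\<lambda>i. if i = 0 then tau else sg i) 0)"
      using assms(6) by simp
    show "\<And>i. 1 \<le> i \<Longrightarrow> i < k \<Longrightarrow> grp.ord ((\<lambda>i. if i = 0 then tau else sg i) i) = 0 \<or> 2 dvd grp.ord ((\<lambda>i. if i = 0 then tau else sg i) i)"
      using assms(7) by simp
    show "0 < k" using k1 by simp
  qed
  interpret F: fpc G "\<lambda>i. if i = 0 then tau else sg i" k by (rule fpc)
  have fft: "\<And>g. g \<in> carrier G \<Longrightarrow> F.ff (tau \<otimes>\<^bsub>G\<^esub> g) = nxt (F.ff g)"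
    using F.ff_tau by simp
  have ffi: "\<And>g. g \<in> carrier G \<Longrightarrow> F.ff (inv\<^bsub>G\<^esub> tau \<otimes>\<^bsub>G\<^esub> g) = prv (F.ff g)"
    using F.ff_itau by simp
  have ffs: "\<And>g i. g \<in> carrier G \<Longrightarrow> 1 \<le> i \<Longrightarrow> i < k \<Longrightarrow> (F.ff (sg i \<otimes>\<^bsub>G\<^esub> g) = A1) \<longleftrightarrow> (F.ff g \<noteq> A1)"
  proof -
    fix g i assume a: "g \<in> carrier G" "1 \<le> i" "i < k"
    then have "(\<lambda>i. if i = 0 then tau else sg i) i = sg i" by simp
    then show "(F.ff (sg i \<otimes>\<^bsub>G\<^esub> g) = A1) \<longleftrightarrow> (F.ff g \<noteq> A1)" using F.ff_sig[OF a] by simp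
  qed
  have one: "\<And>x. x \<in> space m \<Longrightarrow> \<phi> \<one>\<^bsub>G\<^esub> x = x"
    using act.id_eq_one by (metis restrict_apply')
  have comp: "\<And>x g1 g2. x \<in> space m \<Longrightarrow> g1 \<in> carrier G \<Longrightarrow> g2 \<in> carrier G \<Longrightarrow> \<phi> (g1 \<otimes>\<^bsub>G\<^esub> g2) x = \<phi> g1 (\<phi> g2 x)"
    using act.composition_rule by blast
  have img: "\<And>x g. x \<in> space m \<Longrightarrow> g \<in> carrier G \<Longrightarrow> \<phi> g x \<in> space m"
    using act.element_image by blast
  have icanc: "\<And>x g. x \<in> space m \<Longrightarrow> g \<in> carrier G \<Longrightarrow> \<phi> (inv\<^bsub>G\<^esub> g) (\<phi> g x) = x"
  proof -
    fix x g assume a: "x \<in> space m" "g \<in> carrier G"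
    have "\<phi> (inv\<^bsub>G\<^esub> g \<otimes>\<^bsub>G\<^esub> g) x = \<phi> (inv\<^bsub>G\<^esub> g) (\<phi> g x)"
      by (rule comp) (use a in auto)
    moreover have "inv\<^bsub>G\<^esub> g \<otimes>\<^bsub>G\<^esub> g = \<one>\<^bsub>G\<^esub>" using a by simp
    ultimately show "\<phi> (inv\<^bsub>G\<^esub> g) (\<phi> g x) = x" using one a by simp
  qed
  have partA: "\<exists>c. satisfies_rule m G \<phi> tau sg k c"
  proof -
    define Fr where "Fr = {x \<in> space m. \<forall>g\<in>carrier G. \<phi> g x = x \<longrightarrow> g = \<one>\<^bsub>G\<^esub>}"
    define r where "r x = (SOME y. \<exists>h\<in>carrier G. y = \<phi> h x)" for x
    define hx where "hx x = (SOME h. h \<in> carrier G \<and> \<phi> h (r x) = x)" for x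
    define c where "c x = F.ff (hx x)" for x
    have r_in: "\<And>x. x \<in> space m \<Longrightarrow> \<exists>h0\<in>carrier G. r x = \<phi> h0 x"
    proof -
      fix x assume x: "x \<in> space m"
      have "\<exists>y. \<exists>h\<in>carrier G. y = \<phi> h x" by blast
      then show "\<exists>h0\<in>carrier G. r x = \<phi> h0 x" unfolding r_def by (rule someI_ex)
    qed
    have r_sp: "\<And>x. x \<in> space m \<Longrightarrow> r x \<in> space m"
    proof -
      fix x assume x: "x \<in> space m"
      then obtain h0 where "h0 \<in> carrier G" "r x = \<phi> h0 x" using r_in by blast
      then show "r x \<in> space m" using img x by simp
    qed
    have r_orb: "\<And>x g. x \<in> space m \<Longrightarrow> g \<in> carrier G \<Longrightarrow> r (\<phi> g x) = r x"
    proof -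
      fix x g assume a: "x \<in> space m" "g \<in> carrier G"
      have "\<And>y. (\<exists>h\<in>carrier G. y = \<phi> h (\<phi> g x)) \<longleftrightarrow> (\<exists>h\<in>carrier G. y = \<phi> h x)"
      proof
        fix y assume "\<exists>h\<in>carrier G. y = \<phi> h (\<phi> g x)"
        then obtain h where h: "h \<in> carrier G" "y = \<phi> h (\<phi> g x)" by blast
        then have "y = \<phi> (h \<otimes>\<^bsub>G\<^esub> g) x" using comp a by simp
        then show "\<exists>h\<in>carrier G. y = \<phi> h x" using h a by blast
      next
        fix y assume "\<exists>h\<in>carrier G. y = \<phi> h x"
        then obtain h where h: "h \<in> carrier G" "y = \<phi> h x" by blast
        then have "y = \<phi> h (\<phi> (inv\<^bsub>G\<^esub> g) (\<phi> g x))" using icanc a by simp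
        also have "\<dots> = \<phi> (h \<otimes>\<^bsub>G\<^esub> inv\<^bsub>G\<^esub> g) (\<phi> g x)" using comp a h img by simp
        finally show "\<exists>h\<in>carrier G. y = \<phi> h (\<phi> g x)" using h a by blast
      qed
      then show "r (\<phi> g x) = r x" unfolding r_def by presburger
    qed
    have uq: "\<And>x h h'. x \<in> Fr \<Longrightarrow> h \<in> carrier G \<Longrightarrow> h' \<in> carrier G \<Longrightarrow> \<phi> h (r x) = \<phi> h' (r x) \<Longrightarrow> h = h'"
    proof -
      fix x h h' assume x: "x \<in> Fr" and h: "h \<in> carrier G" "h' \<in> carrier G" and e: "\<phi> h (r x) = \<phi> h' (r x)"
      have xs: "x \<in> space m" using x Fr_def by blast
      obtain h0 where h0: "h0 \<in> carrier G" "r x = \<phi> h0 x" using r_in xs by blast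
      have c1: "h \<otimes>\<^bsub>G\<^esub> h0 \<in> carrier G" "h' \<otimes>\<^bsub>G\<^esub> h0 \<in> carrier G" using h h0 by auto
      have "\<phi> (h \<otimes>\<^bsub>G\<^esub> h0) x = \<phi> (h' \<otimes>\<^bsub>G\<^esub> h0) x" using e h0 comp xs h by simp
      then have "\<phi> (inv\<^bsub>G\<^esub> (h' \<otimes>\<^bsub>G\<^esub> h0)) (\<phi> (h \<otimes>\<^bsub>G\<^esub> h0) x) = x"
        using icanc xs c1 by simp
      then have "\<phi> (inv\<^bsub>G\<^esub> (h' \<otimes>\<^bsub>G\<^esub> h0) \<otimes>\<^bsub>G\<^esub> (h \<otimes>\<^bsub>G\<^esub> h0)) x = x"
        using comp xs c1 by simp
      then have "inv\<^bsub>G\<^esub> (h' \<otimes>\<^bsub>G\<^esub> h0) \<otimes>\<^bsub>G\<^esub> (h \<otimes>\<^bsub>G\<^esub> h0) = \<one>\<^bsub>G\<^esub>"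
        using x c1 unfolding Fr_def by blast
      then have "h \<otimes>\<^bsub>G\<^esub> h0 = h' \<otimes>\<^bsub>G\<^esub> h0"
        using c1 by (metis grp.inv_closed grp.inv_equality grp.inv_inv)
      then show "h = h'" using h h0 by simp
    qed
    have hx_ok: "\<And>x. x \<in> Fr \<Longrightarrow> hx x \<in> carrier G \<and> \<phi> (hx x) (r x) = x"
    proof -
      fix x assume x: "x \<in> Fr"
      have xs: "x \<in> space m" using x Fr_def by blast
      obtain h0 where h0: "h0 \<in> carrier G" "r x = \<phi> h0 x" using r_in xs by blast
      have "inv\<^bsub>G\<^esub> h0 \<in> carrier G \<and> \<phi> (inv\<^bsub>G\<^esub> h0) (r x) = x" using h0 icanc xs by simp
      then have "\<exists>h. h \<in> carrier G \<and> \<phi> h (r x) = x" by blast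
      then show "hx x \<in> carrier G \<and> \<phi> (hx x) (r x) = x" unfolding hx_def by (rule someI_ex)
    qed
    have hx_mult: "\<And>x g. x \<in> Fr \<Longrightarrow> g \<in> carrier G \<Longrightarrow> hx (\<phi> g x) = g \<otimes>\<^bsub>G\<^esub> hx x"
    proof -
      fix x g assume x: "x \<in> Fr" and g: "g \<in> carrier G"
      have xs: "x \<in> space m" using x Fr_def by blast
      have hxx: "hx x \<in> carrier G" "\<phi> (hx x) (r x) = x" using hx_ok x by auto
      have rr: "r (\<phi> g x) = r x" using r_orb xs g by blast
      have w: "\<phi> (g \<otimes>\<^bsub>G\<^esub> hx x) (r x) = \<phi> g x"
      proof -
        have "\<phi> (g \<otimes>\<^bsub>G\<^esub> hx x) (r x) = \<phi> g (\<phi> (hx x) (r x))"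
          by (rule comp) (use r_sp xs g hxx in auto)
        then show ?thesis using hxx(2) by simp
      qed
      have gh: "g \<otimes>\<^bsub>G\<^esub> hx x \<in> carrier G" using g hxx by simp
      have "\<exists>h. h \<in> carrier G \<and> \<phi> h (r (\<phi> g x)) = \<phi> g x"
        using gh w unfolding rr by blast
      then have hy: "hx (\<phi> g x) \<in> carrier G \<and> \<phi> (hx (\<phi> g x)) (r (\<phi> g x)) = \<phi> g x"
        unfolding hx_def by (rule someI_ex)
      have hy2: "\<phi> (hx (\<phi> g x)) (r x) = \<phi> (g \<otimes>\<^bsub>G\<^esub> hx x) (r x)"
        using hy w unfolding rr by simp
      show "hx (\<phi> g x) = g \<otimes>\<^bsub>G\<^esub> hx x"
        using uq[OF x _ gh hy2] hy by blast
    qed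
    have rule: "\<And>x. x \<in> Fr \<Longrightarrow> rule_at G \<phi> tau sg k c x"
    proof -
      fix x assume x: "x \<in> Fr"
      have hxx: "hx x \<in> carrier G" using hx_ok x by auto
      have itC: "inv\<^bsub>G\<^esub> tau \<in> carrier G" using tC by simp
      have ca: "c (\<phi> (inv\<^bsub>G\<^esub> tau) x) = prv (c x)"
      proof -
        have "hx (\<phi> (inv\<^bsub>G\<^esub> tau) x) = inv\<^bsub>G\<^esub> tau \<otimes>\<^bsub>G\<^esub> hx x" using hx_mult[OF x itC] .
        then show ?thesis unfolding c_def using ffi[OF hxx] by simp
      qed
      have cb: "c (\<phi> tau x) = nxt (c x)"
      proof -
        have "hx (\<phi> tau x) = tau \<otimes>\<^bsub>G\<^esub> hx x" using hx_mult[OF x tC] .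
        then show ?thesis unfolding c_def using fft[OF hxx] by simp
      qed
      have cs: "\<And>i. i \<in> {1..<k} \<Longrightarrow> (c (\<phi> (sg i) x) = A1) \<longleftrightarrow> (c x \<noteq> A1)"
      proof -
        fix i assume i: "i \<in> {1..<k}"
        then have "hx (\<phi> (sg i) x) = sg i \<otimes>\<^bsub>G\<^esub> hx x" using hx_mult[OF x sC] by simp
        then show "(c (\<phi> (sg i) x) = A1) \<longleftrightarrow> (c x \<noteq> A1)" unfolding c_def using ffs[OF hxx] i by simp
      qed
      have S: "{i \<in> {1..<k}. c (\<phi> (sg i) x) = A1} = (if c x = A1 then {} else {1..<k})"
        using cs by auto
      have ck: "card {1..<k} = k - 1" by simp
      have n1: "1 + (k - 1) = k" using k1 by simp
      show "rule_at G \<phi> tau sg k c x"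
      proof (cases "c x")
        case A1 then show ?thesis unfolding rule_at_def Let_def ca cb S by simp
      next
        case A2 then show ?thesis unfolding rule_at_def Let_def ca cb S ck using n1 by simp
      next
        case A3 then show ?thesis unfolding rule_at_def Let_def ca cb S ck using n1 by simp
      qed
    qed
    have "AE x in m. rule_at G \<phi> tau sg k c x"
      using assms(11) by (rule AE_mp) (rule AE_I2, use rule Fr_def in blast)
    then show ?thesis unfolding satisfies_rule_def by blast
  qed
  have partB: "\<not> (\<exists>B \<mu> c. invariant_extension m G \<phi> B \<mu> \<and>
                satisfies_rule m G \<phi> tau sg k c \<and>
                (\<forall>j. c -` {j} \<inter> space m \<in> B))"
  proof
    assume "\<exists>B \<mu> c. invariant_extension m G \<phi> B \<mu> \<and>
                satisfies_rule m G \<phi> tau sg k c \<and>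
                (\<forall>j. c -` {j} \<inter> space m \<in> B)"
    then obtain B \<mu> c where ie: "invariant_extension m G \<phi> B \<mu>"
      and sr: "satisfies_rule m G \<phi> tau sg k c" and pre: "\<forall>j. c -` {j} \<inter> space m \<in> B"
      by blast
    have alg: "Sigma_Algebra.algebra (space m) B" and sub: "sets m \<subseteq> B"
      and pos: "positive B \<mu>" and add: "additive B \<mu>" and tot: "\<mu> (space m) = 1"
      and ext: "\<forall>A \<in> sets m. \<mu> A = emeasure m A"
      and inv: "\<forall>g \<in> carrier G. \<forall>A \<in> B. \<phi> g ` A \<in> B \<and> \<mu> (\<phi> g ` A) = \<mu> A"
      using ie unfolding invariant_extension_def by blast+
    interpret Bal: Sigma_Algebra.algebra "space m" B by (rule alg)
    have inc: "increasing B \<mu>" using Bal.additive_increasing pos add by blast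
    have incD: "\<And>X Y. X \<in> B \<Longrightarrow> Y \<in> B \<Longrightarrow> X \<subseteq> Y \<Longrightarrow> \<mu> X \<le> \<mu> Y"
      using inc unfolding increasing_def by blast
    have invB: "\<And>g A. g \<in> carrier G \<Longrightarrow> A \<in> B \<Longrightarrow> \<phi> g ` A \<in> B" using inv by blast
    have invM: "\<And>g A. g \<in> carrier G \<Longrightarrow> A \<in> B \<Longrightarrow> \<mu> (\<phi> g ` A) = \<mu> A" using inv by blast
    have ar: "AE x in m. rule_at G \<phi> tau sg k c x" using sr unfolding satisfies_rule_def .
    then obtain N where N: "{x \<in> space m. \<not> rule_at G \<phi> tau sg k c x} \<subseteq> N"
      "emeasure m N = 0" "N \<in> sets m" by (rule AE_E)
    have NB: "N \<in> B" using N(3) sub by blast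
    have N0: "\<mu> N = 0" using N ext by simp
    define ti where "ti = inv\<^bsub>G\<^esub> tau"
    have tiC: "ti \<in> carrier G" unfolding ti_def using tC by simp
    define N1 where "N1 = \<phi> ti ` N"
    define N2 where "N2 = \<phi> ti ` N1"
    have N1B: "N1 \<in> B" unfolding N1_def using invB tiC NB by blast
    have N2B: "N2 \<in> B" unfolding N2_def using invB tiC N1B by blast
    have N10: "\<mu> N1 = 0" unfolding N1_def using invM tiC NB N0 by simp
    have N20: "\<mu> N2 = 0" unfolding N2_def using invM tiC N1B N10 by simp
    define Z where "Z = N \<union> N1 \<union> N2"
    have N01B: "N \<union> N1 \<in> B" using NB N1B by blast
    have ZB: "Z \<in> B" unfolding Z_def using N01B N2B by blast
    have Z0: "\<mu> Z = 0"
    proof -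
      have "\<mu> (N \<union> N1) \<le> \<mu> N + \<mu> N1" using mu_un_le[OF alg pos add NB N1B] .
      then have a: "\<mu> (N \<union> N1) \<le> 0" using N0 N10 by simp
      have "\<mu> Z \<le> \<mu> (N \<union> N1) + \<mu> N2" unfolding Z_def using mu_un_le[OF alg pos add N01B N2B] .
      then have "\<mu> Z \<le> 0" using a N20 by (metis add.right_neutral add_right_mono order_trans)
      then show ?thesis by simp
    qed
    define W where "W = space m - Z"
    have bk: "\<And>y. y \<in> space m \<Longrightarrow> \<phi> ti (\<phi> tau y) = y" unfolding ti_def using icanc tC by blast
    have goodN: "\<And>y. y \<in> space m \<Longrightarrow> y \<notin> N \<Longrightarrow> rule_at G \<phi> tau sg k c y" using N(1) by blast
    have key: "\<And>x. x \<in> W \<Longrightarrow> c x = nxt (c (\<phi> ti x)) \<and> c (\<phi> tau x) = nxt (c x)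
        \<and> rule_at G \<phi> tau sg k c x"
    proof -
      fix x assume xW: "x \<in> W"
      have xs: "x \<in> space m" and xN: "x \<notin> N" and xN1: "x \<notin> N1" and xN2: "x \<notin> N2"
        using xW unfolding W_def Z_def by auto
      define y where "y = \<phi> tau x"
      define z where "z = \<phi> tau y"
      have ys: "y \<in> space m" unfolding y_def using img xs tC by blast
      have zs: "z \<in> space m" unfolding z_def using img ys tC by blast
      have by_: "\<phi> ti y = x" unfolding y_def using bk xs by blast
      have bz: "\<phi> ti z = y" unfolding z_def using bk ys by blast
      have yN: "y \<notin> N"
      proof
        assume "y \<in> N" then have "\<phi> ti y \<in> N1" unfolding N1_def by blast
        then show False using by_ xN1 by simp
      qed
      have zN: "z \<notin> N"
      proof
        assume "z \<in> N" then have "\<phi> ti z \<in> N1" unfolding N1_def by blast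
        then have "\<phi> ti (\<phi> ti z) \<in> N2" unfolding N2_def by blast
        then show False using bz by_ xN2 by simp
      qed
      have rx: "rule_at G \<phi> tau sg k c x" using goodN xs xN by blast
      have ry: "rule_at G \<phi> tau sg k c y" using goodN ys yN by blast
      have rz: "rule_at G \<phi> tau sg k c z" using goodN zs zN by blast
      have n1: "c y \<noteq> c x" using rule_neq[OF ry] by_ unfolding ti_def by simp
      have n2: "c z \<noteq> c y" using rule_neq[OF rz] bz unfolding ti_def by simp
      have e1: "c x = nxt (c (\<phi> ti x))" using rule_nxt[OF rx] n1 unfolding y_def ti_def by blast
      have e2: "c y = nxt (c (\<phi> ti y))" using rule_nxt[OF ry] n2 unfolding z_def ti_def by blast
      show "c x = nxt (c (\<phi> ti x)) \<and> c (\<phi> tau x) = nxt (c x) \<and> rule_at G \<phi> tau sg k c x"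
        using e1 e2 by_ rx unfolding y_def by simp
    qed
    have sig: "\<And>x. x \<in> W \<Longrightarrow> c x \<noteq> A1 \<Longrightarrow> c (\<phi> (sg 1) x) = A1"
    proof -
      fix x assume xW: "x \<in> W" and nA: "c x \<noteq> A1"
      have kx: "c x = nxt (c (\<phi> ti x))" "c (\<phi> tau x) = nxt (c x)" "rule_at G \<phi> tau sg k c x"
        using key[OF xW] by auto
      show "c (\<phi> (sg 1) x) = A1" using rule_sig[OF kx(3) _ kx(2) nA k1] kx(1) unfolding ti_def by blast
    qed
    define C where "C j = c -` {j} \<inter> space m" for j
    have CB: "\<And>j. C j \<in> B" unfolding C_def using pre by blast
    have CW: "\<And>j. C j - Z = C j \<inter> W" unfolding C_def W_def by blast
    have CWB: "\<And>j. C j \<inter> W \<in> B" using CW CB ZB by (metis Bal.Diff)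
    have I1: "\<And>j. \<phi> ti ` (C j \<inter> W) \<subseteq> C (prv j)"
    proof
      fix j y assume "y \<in> \<phi> ti ` (C j \<inter> W)"
      then obtain x where x: "x \<in> C j" "x \<in> W" "y = \<phi> ti x" by blast
      have xs: "x \<in> space m" using x(2) unfolding W_def by blast
      have "c x = nxt (c y)" using key[OF x(2)] x(3) by blast
      moreover have "c x = j" using x(1) unfolding C_def by simp
      ultimately have "c y = prv j" by (metis nxt_prv(2))
      moreover have "y \<in> space m" using x(3) img xs tiC by blast
      ultimately show "y \<in> C (prv j)" unfolding C_def by simp
    qed
    have ple: "\<And>j. \<mu> (C j) \<le> \<mu> (C (prv j))"
    proof -
      fix j
      have "\<mu> (C j) = \<mu> (C j - Z)" using mu_diff_null[OF alg pos add CB[of j] ZB Z0] by (rule sym)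
      also have "\<dots> = \<mu> (C j \<inter> W)" using CW by simp
      also have "\<dots> = \<mu> (\<phi> ti ` (C j \<inter> W))" using invM[OF tiC CWB[of j]] by (rule sym)
      also have "\<dots> \<le> \<mu> (C (prv j))" using incD[OF invB[OF tiC CWB[of j]] CB I1[of j]] .
      finally show "\<mu> (C j) \<le> \<mu> (C (prv j))" .
    qed
    have p13: "\<mu> (C A1) \<le> \<mu> (C A3)" using ple[of A1] by simp
    have p32: "\<mu> (C A3) \<le> \<mu> (C A2)" using ple[of A3] by simp
    have p21: "\<mu> (C A2) \<le> \<mu> (C A1)" using ple[of A2] by simp
    have eq2: "\<mu> (C A2) = \<mu> (C A1)" using p13 p32 p21 by (meson antisym order_trans)
    have eq3: "\<mu> (C A3) = \<mu> (C A1)" using p13 p32 p21 by (meson antisym order_trans)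
    have disj12: "C A2 \<inter> C A3 = {}" unfolding C_def by auto
    have U23: "C A2 \<union> C A3 \<in> B" using CB by blast
    have m23: "\<mu> (C A2 \<union> C A3) = \<mu> (C A2) + \<mu> (C A3)"
      using additiveD[OF add disj12 CB CB] .
    have disj1: "C A1 \<inter> (C A2 \<union> C A3) = {}" unfolding C_def by auto
    have m123: "\<mu> (C A1 \<union> (C A2 \<union> C A3)) = \<mu> (C A1) + \<mu> (C A2 \<union> C A3)"
      using additiveD[OF add disj1 CB U23] .
    have sp: "C A1 \<union> (C A2 \<union> C A3) = space m"
    proof
      show "C A1 \<union> (C A2 \<union> C A3) \<subseteq> space m" unfolding C_def by blast
      show "space m \<subseteq> C A1 \<union> (C A2 \<union> C A3)"
      proof
        fix x assume "x \<in> space m"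
        then show "x \<in> C A1 \<union> (C A2 \<union> C A3)" unfolding C_def by (cases "c x") auto
      qed
    qed
    have three: "\<mu> (C A1) + \<mu> (C A1) + \<mu> (C A1) = 1"
      using m123 m23 sp tot eq2 eq3 by (simp add: add.assoc)
    define D where "D = C A2 \<union> C A3"
    have DB: "D \<in> B" unfolding D_def using U23 .
    have DW: "D - Z = D \<inter> W" unfolding D_def C_def W_def by blast
    have DWB: "D \<inter> W \<in> B" using DW DB ZB by (metis Bal.Diff)
    have sC1: "sg 1 \<in> carrier G" using sC k1 by simp
    have I2: "\<phi> (sg 1) ` (D \<inter> W) \<subseteq> C A1"
    proof
      fix y assume "y \<in> \<phi> (sg 1) ` (D \<inter> W)"
      then obtain x where x: "x \<in> D" "x \<in> W" "y = \<phi> (sg 1) x" by blast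
      have xs: "x \<in> space m" using x(2) unfolding W_def by blast
      have "c x \<noteq> A1" using x(1) unfolding D_def C_def by auto
      then have "c y = A1" using sig x by blast
      moreover have "y \<in> space m" using x(3) img xs sC1 by blast
      ultimately show "y \<in> C A1" unfolding C_def by simp
    qed
    have "\<mu> D = \<mu> (D - Z)" using mu_diff_null[OF alg pos add DB ZB Z0] by (rule sym)
    also have "\<dots> = \<mu> (D \<inter> W)" using DW by simp
    also have "\<dots> = \<mu> (\<phi> (sg 1) ` (D \<inter> W))" using invM[OF sC1 DWB] by (rule sym)
    also have "\<dots> \<le> \<mu> (C A1)" using incD[OF invB[OF sC1 DWB] CB I2] .
    finally have "\<mu> D \<le> \<mu> (C A1)" .
    then have "\<mu> (C A1) + \<mu> (C A1) \<le> \<mu> (C A1)" using m23 eq2 eq3 unfolding D_def by simp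
    then show False using three ennreal_contra by blast
  qed
  show ?thesis unfolding paradoxical_rule_def using partA partB by blast
qed


end
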